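(* Let $K\subset\mathbb R^{2d-2}$ be a compact set such that $\pi_0(K)$ has non-empty interior in $\mathbb R^{d-1}$, where $\pi_0:\mathbb R^{2d-2}\to\mathbb R^{d-1}$ is the projection onto the first $d-1$ coordinates. Writing points of $K$ as $(\mathbf v,\mathbf a)$ with $\mathbf v,\mathbf a\in\mathbb R^{d-1}$, let $$\mathbb K_0=\bigcup_{(\mathbf v,\mathbf a)\in K}\{(\mathbf a,0)+t(\mathbf v,1): t\in[0,1]\}\subset\mathbb R^d.$$ Then some finite union of rotated copies of $\mathbb K_0$ is a Kakeya set in $\mathbb R^d$.
   Context: A Kakeya set in $\mathbb R^d$ is a compact set containing a unit line segment in every direction. *)

theory Defs
  imports "HOL-Analysis.Analysis"
begin

text \<open>R^(d-1) is modelled as real^'n (d-1 = CARD('n) \<ge> 1), and R^d as real^('n option):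
  the coordinates Some i are the first d-1 coordinates, None is the last one.\<close>

definition embed :: "real^'n \<Rightarrow> real \<Rightarrow> real^('n option)" where
  "embed a s = (\<chi> j. case j of None \<Rightarrow> s | Some i \<Rightarrow> a $ i)"

definition kakeya_set :: "'a::euclidean_space set \<Rightarrow> bool" where
  "kakeya_set S \<longleftrightarrow> compact S \<and>
     (\<forall>e. norm e = 1 \<longrightarrow> (\<exists>x. closed_segment x (x + e) \<subseteq> S))"

definition rotation :: "(real^'m \<Rightarrow> real^'m) \<Rightarrow> bool" where
  "rotation f \<longleftrightarrow> orthogonal_transformation f \<and> det (matrix f) = 1"

definition K0_set :: "((real^'n) \<times> (real^'n)) set \<Rightarrow> (real^('n option)) set" where
  "K0_set K = (\<Union>(v, a)\<in>K. {embed a 0 + t *\<^sub>R embed v 1 | t. t \<in> {0..1}})"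

end

theory Submission
  imports Defs
begin

lemma embed_None[simp]: "embed a s $ None = s"
  by (simp add: embed_def)

lemma embed_Some[simp]: "embed a s $ Some i = a $ i"
  by (simp add: embed_def)

lemma continuous_on_embed:
  assumes "continuous_on S f" "continuous_on S g"
  shows "continuous_on S (\<lambda>x. embed (f x) (g x))"
  unfolding embed_def
proof (rule continuous_on_vec_lambda)
  fix j
  show "continuous_on S (\<lambda>x. case j of None \<Rightarrow> g x | Some i \<Rightarrow> f x $ i)"
    by (cases j) (auto intro: assms continuous_on_component)
qed

lemma compact_K0:
  fixes K :: "((real^'n) \<times> (real^'n)) set"
  assumes "compact K"
  shows "compact (K0_set K)"
proof -
  have eq: "K0_set K = (\<lambda>p. embed (snd (fst p)) 0 + snd p *\<^sub>R embed (fst (fst p)) 1) ` (K \<times> {0..1})"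
    unfolding K0_set_def by (auto simp: image_iff; force)
  have "compact (K \<times> {0..(1::real)})"
    using assms by (simp add: compact_Times)
  moreover have "continuous_on (K \<times> {0..(1::real)})
     (\<lambda>p. embed (snd (fst p)) 0 + snd p *\<^sub>R embed (fst (fst p)) 1)"
    by (intro continuous_intros continuous_on_embed)
  ultimately show ?thesis
    unfolding eq using compact_continuous_image by blast
qed

lemma seg_in_K0:
  fixes K :: "((real^'n) \<times> (real^'n)) set"
  assumes w: "w $ None > 0" "norm w = 1"
    and P: "(\<chi> i. w $ Some i / w $ None) \<in> fst ` K"
  shows "\<exists>x. closed_segment x (x + w) \<subseteq> K0_set K"
proof -
  define c where "c = w $ None"
  define v where "v = (\<chi> i. w $ Some i / w $ None)"
  obtain a where va: "(v, a) \<in> K" using P unfolding v_def by force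
  have c0: "c > 0" using w c_def by simp
  have c1: "c \<le> 1" using component_le_norm_cart[of w None] w c_def by simp
  have wc: "w = c *\<^sub>R embed v 1"
  proof (rule vec_eq_iff[THEN iffD2], rule allI)
    fix j :: "'n option"
    show "w $ j = (c *\<^sub>R embed v 1) $ j"
      using c0 by (cases j) (auto simp: v_def c_def)
  qed
  have "closed_segment (embed a 0) (embed a 0 + w) \<subseteq> K0_set K"
  proof
    fix y assume "y \<in> closed_segment (embed a 0) (embed a 0 + w)"
    then obtain s where s: "0 \<le> s" "s \<le> 1" "y = embed a 0 + s *\<^sub>R w"
      unfolding closed_segment_def by (auto simp: algebra_simps)
    have "y = embed a 0 + (s * c) *\<^sub>R embed v 1" using s wc by simp
    moreover have "s * c \<in> {0..1}" using s c0 c1 by (simp add: mult_le_one)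
    ultimately show "y \<in> K0_set K" unfolding K0_set_def using va by blast
  qed
  then show ?thesis by blast
qed

theorem proposition2p1:
  fixes K :: "((real^'n) \<times> (real^'n)) set"
  assumes "compact K"
    and "interior (fst ` K) \<noteq> {}"
  shows "\<exists>F. finite F \<and> (\<forall>f\<in>F. rotation f) \<and> kakeya_set (\<Union>f\<in>F. f ` K0_set K)"
proof -
  obtain v0 where "v0 \<in> interior (fst ` K)" using assms(2) by blast
  then obtain r where r: "r > 0" "ball v0 r \<subseteq> fst ` K" using mem_interior by blast
  define P :: "real^'n option \<Rightarrow> real^'n" where "P = (\<lambda>w. \<chi> i. w $ Some i / w $ None)"
  define H :: "(real^'n option) set" where "H = {w. w $ None > 0}"
  define U where "U = P -` ball v0 r \<inter> H"
  have openH: "open H" unfolding H_def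
    by (rule open_Collect_less) (intro continuous_intros)+
  have "continuous_on H P" unfolding P_def H_def
    by (intro continuous_intros) auto
  then have openU: "open U" unfolding U_def using continuous_on_open_vimage[OF openH] by blast
  have segU: "\<exists>x. closed_segment x (x + w) \<subseteq> K0_set K" if "w \<in> U" "norm w = 1" for w
  proof -
    have "P w \<in> ball v0 r" "w $ None > 0" using that unfolding U_def H_def by auto
    then show ?thesis using r seg_in_K0[of w K] that unfolding P_def by blast
  qed
  define u0 where "u0 = embed v0 1 /\<^sub>R norm (embed v0 1)"
  have nz: "norm (embed v0 1) > 0"
    using component_le_norm_cart[of "embed v0 1" None] by (metis embed_None abs_one zero_less_one less_le_trans)
  have nu0: "norm u0 = 1" using nz unfolding u0_def by simp
  have u0U: "u0 \<in> U"
  proof -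
    have "u0 $ None > 0" using nz by (simp add: u0_def)
    moreover have "P u0 = v0" unfolding P_def u0_def
      using nz by (simp add: vec_eq_iff)
    ultimately show ?thesis unfolding U_def H_def using r by simp
  qed
  have card2: "2 \<le> CARD('n option)" by (simp add: card_UNIV_option)
  have ex: "\<exists>f. rotation f \<and> f u0 = e" if ne1: "norm e = 1" for e
  proof -
    obtain f where "orthogonal_transformation f" "det (matrix f) = 1" "f u0 = e"
      using rotation_exists[OF card2, of u0 e] nu0 ne1 by metis
    then show ?thesis unfolding rotation_def by blast
  qed
  define h where "h = (\<lambda>e. SOME f. rotation f \<and> f u0 = e)"
  have h: "rotation (h e) \<and> h e u0 = e" if "norm e = 1" for e
    unfolding h_def using someI_ex[OF ex[OF that]] .
  have oh: "orthogonal_transformation (h e)" if "norm e = 1" for e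
    using h[OF that] unfolding rotation_def by blast
  have "sphere (0::real^'n option) 1 \<subseteq> (\<Union>e\<in>sphere 0 1. h e ` U)"
  proof
    fix e :: "real^'n option" assume "e \<in> sphere 0 1"
    then have "norm e = 1" by simp
    then have "e \<in> h e ` U" using h u0U by (metis imageI)
    then show "e \<in> (\<Union>e\<in>sphere 0 1. h e ` U)" using \<open>e \<in> sphere 0 1\<close> by blast
  qed
  moreover have "open (h e ` U)" if "e \<in> sphere 0 1" for e
  proof -
    have o: "orthogonal_transformation (h e)" using oh that by simp
    show ?thesis
      using open_bijective_linear_image_eq[OF orthogonal_transformation_linear[OF o]
          orthogonal_transformation_bij[OF o]] openU by simp
  qed
  ultimately obtain C where C: "C \<subseteq> sphere 0 1" "finite C" "sphere 0 1 \<subseteq> (\<Union>e\<in>C. h e ` U)"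
    using compactE_image[OF compact_sphere, of "sphere 0 1" "\<lambda>e. h e ` U"] by metis
  show ?thesis
  proof (intro exI conjI ballI)
    show "finite (h ` C)" using C by simp
    show "rotation f" if "f \<in> h ` C" for f using that C h by auto
    show "kakeya_set (\<Union>f\<in>h ` C. f ` K0_set K)"
      unfolding kakeya_set_def
    proof (intro conjI allI impI)
      show "compact (\<Union>f\<in>h ` C. f ` K0_set K)"
      proof (rule compact_UN)
        show "finite (h ` C)" using C by simp
        fix f assume "f \<in> h ` C"
        then have "orthogonal_transformation f" using C oh by auto
        then have "continuous_on (K0_set K) f"
          by (intro linear_continuous_on linear_conv_bounded_linear[THEN iffD1]
              orthogonal_transformation_linear)
        then show "compact (f ` K0_set K)"
          using compact_K0[OF assms(1)] compact_continuous_image by blast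
      qed
      fix e :: "real^'n option" assume ne: "norm e = 1"
      then obtain c w where c: "c \<in> C" and w: "w \<in> U" and e: "e = h c w" using C by force
      have o: "orthogonal_transformation (h c)" using oh C c by auto
      have nw: "norm w = 1" using ne e orthogonal_transformation_norm[OF o] by simp
      obtain x where x: "closed_segment x (x + w) \<subseteq> K0_set K" using segU[OF w nw] by blast
      have lin: "linear (h c)" using o orthogonal_transformation_linear by blast
      have "closed_segment (h c x) (h c x + e) = h c ` closed_segment x (x + w)"
        using closed_segment_linear_image[OF lin, of x "x + w"] e linear_add[OF lin] by simp
      also have "\<dots> \<subseteq> (\<Union>f\<in>h ` C. f ` K0_set K)" using x c by blast
      finally show "\<exists>x. closed_segment x (x + e) \<subseteq> (\<Union>f\<in>h ` C. f ` K0_set K)" by blast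
    qed
  qed
qed

end
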